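(* Let $A$ be a finite undirected multigraph (an object of $\mathbf{uGraph}$) possessing an edge $e$ such that removing $e$ from $A$ yields a disjoint union $A_1+A_2$ of two subgraphs (i.e. $e$ is a bridge), and let $A_1+A_2\hookrightarrow A$ be the inclusion. Let $\beta_j:A_j\hookrightarrow B_j$ ($j=1,2$) be $\mathcal M$-morphisms, and let $B$ be the pushout of $A\hookleftarrow A_1+A_2\xrightarrow{[\beta_1,\beta_2]}B_1+B_2$, with induced $B_1+B_2\hookrightarrow B$. Then $$\mathsf{Shift}\big(A_1+A_2\xrightarrow{[\beta_1,\beta_2]}B_1+B_2,\ \neg\exists(A_1+A_2\hookrightarrow A)\big)=\neg\exists(B_1+B_2\hookrightarrow B).$$
   Context: $\mathbf{uGraph}$: objects are triples $(E,V,i)$ of finite sets and a map $i:E\to\mathcal P^{(1,2)}(V)$ into the subsets of $V$ of size 1 or 2; morphisms are pairs of maps compatible with incidence; $\mathcal M$ is the class of component-wise injective morphisms. Conditions over an object $X$: $\mathsf{true}$, $\exists(f:X\hookrightarrow Y,c_Y)$ with $f\in\mathcal M$ and $c_Y$ a condition over $Y$ (write $\exists(f)$ for $\exists(f,\mathsf{true})$), $\neg c_X$, $c^{(1)}_X\wedge c^{(2)}_X$. The operation $\mathsf{Shift}$ (extending a condition over $X$ along $y:X\hookrightarrow Y$ in $\mathcal M$ to a condition over $Y$, such that $g\circ y\models c_X$ iff $g\models\mathsf{Shift}(y,c_X)$ for all $g\in\mathcal M$ out of $Y$) is computed recursively by: $\mathsf{Shift}(y,\mathsf{true})=\mathsf{true}$;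 $\mathsf{Shift}(y,\neg c)=\neg\mathsf{Shift}(y,c)$; $\mathsf{Shift}(y,c^{(1)}\wedge c^{(2)})=\mathsf{Shift}(y,c^{(1)})\wedge\mathsf{Shift}(y,c^{(2)})$; and $\mathsf{Shift}(y,\exists(a:X\hookrightarrow A,c_A))=\bigwedge\exists(\bar a,\mathsf{Shift}(\bar y,c_A))$, where the conjunction ranges over triples $(a':X'\hookrightarrow A,x':X\hookrightarrow X',y':X'\hookrightarrow Y)$ of $\mathcal M$-morphisms (up to isomorphism) with $a'\circ x'=a$ and $y'\circ x'=y$, where $A_{X'}$ is the pushout of $A\xleftarrow{a'}X'\xrightarrow{y'}Y$ with induced $\bar a:Y\hookrightarrow A_{X'}$ and $\bar y:A\hookrightarrow A_{X'}$. *)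

theory Defs
  imports Main
begin

record ugraph =
  gE :: "nat set"
  gV :: "nat set"
  gI :: "nat \<Rightarrow> nat set"

definition is_graph :: "ugraph \<Rightarrow> bool" where
  "is_graph G \<longleftrightarrow> finite (gE G) \<and> finite (gV G) \<and>
     (\<forall>e\<in>gE G. gI G e \<subseteq> gV G \<and> card (gI G e) \<in> {1, 2})"

record mor =
  mE :: "nat \<Rightarrow> nat"
  mV :: "nat \<Rightarrow> nat"

definition is_mor :: "ugraph \<Rightarrow> ugraph \<Rightarrow> mor \<Rightarrow> bool" where
  "is_mor G H f \<longleftrightarrow> mE f ` gE G \<subseteq> gE H \<and> mV f ` gV G \<subseteq> gV H \<and>
     (\<forall>e\<in>gE G. gI H (mE f e) = mV f ` gI G e)"

definition M_mor :: "ugraph \<Rightarrow> ugraph \<Rightarrow> mor \<Rightarrow> bool" where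
  "M_mor G H f \<longleftrightarrow> is_mor G H f \<and> inj_on (mE f) (gE G) \<and> inj_on (mV f) (gV G)"

definition comp :: "mor \<Rightarrow> mor \<Rightarrow> mor" where
  "comp g f = \<lparr>mE = mE g \<circ> mE f, mV = mV g \<circ> mV f\<rparr>"

definition idm :: mor where
  "idm = \<lparr>mE = id, mV = id\<rparr>"

definition mor_eq :: "ugraph \<Rightarrow> mor \<Rightarrow> mor \<Rightarrow> bool" where
  "mor_eq G f g \<longleftrightarrow> (\<forall>e\<in>gE G. mE f e = mE g e) \<and> (\<forall>v\<in>gV G. mV f v = mV g v)"

definition is_iso :: "ugraph \<Rightarrow> ugraph \<Rightarrow> mor \<Rightarrow> bool" where
  "is_iso G H f \<longleftrightarrow> is_mor G H f \<and> bij_betw (mE f) (gE G) (gE H) \<and> bij_betw (mV f) (gV G) (gV H)"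

text \<open>P (with ab : Y \<rightarrow> P and yb : A \<rightarrow> P) is a pushout of A <-a- X -y-> Y.\<close>
definition is_pushout :: "ugraph \<Rightarrow> ugraph \<Rightarrow> ugraph \<Rightarrow> mor \<Rightarrow> mor \<Rightarrow> ugraph \<Rightarrow> mor \<Rightarrow> mor \<Rightarrow> bool" where
  "is_pushout X A Y a y P ab yb \<longleftrightarrow>
     is_graph P \<and> is_mor Y P ab \<and> is_mor A P yb \<and> mor_eq X (comp yb a) (comp ab y) \<and>
     (\<forall>Q p q. is_graph Q \<and> is_mor A Q p \<and> is_mor Y Q q \<and> mor_eq X (comp p a) (comp q y) \<longrightarrow>
        (\<exists>u. is_mor P Q u \<and> mor_eq A (comp u yb) p \<and> mor_eq Y (comp u ab) q \<and>
           (\<forall>u'. is_mor P Q u' \<and> mor_eq A (comp u' yb) p \<and> mor_eq Y (comp u' ab) q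
                 \<longrightarrow> mor_eq P u' u)))"

text \<open>CEx B f c stands for \<exists>(f : X \<hookrightarrow> B, c) for a condition over X.\<close>
datatype cond = CTrue | CEx ugraph mor cond | CNeg cond | CAnd cond cond

fun bigAnd :: "cond list \<Rightarrow> cond" where
  "bigAnd [] = CTrue"
| "bigAnd [c] = c"
| "bigAnd (c # cs) = CAnd c (bigAnd cs)"

definition valid_triple :: "ugraph \<Rightarrow> ugraph \<Rightarrow> ugraph \<Rightarrow> mor \<Rightarrow> mor \<Rightarrow>
     ugraph \<times> mor \<times> mor \<times> mor \<Rightarrow> bool" where
  "valid_triple X Y A a y t \<longleftrightarrow> (case t of (X', a', x', y') \<Rightarrow>
     is_graph X' \<and> M_mor X' A a' \<and> M_mor X X' x' \<and> M_mor X' Y y' \<and>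
     mor_eq X (comp a' x') a \<and> mor_eq X (comp y' x') y)"

definition triple_iso :: "ugraph \<Rightarrow> ugraph \<times> mor \<times> mor \<times> mor \<Rightarrow> ugraph \<times> mor \<times> mor \<times> mor \<Rightarrow> bool" where
  "triple_iso X t1 t2 \<longleftrightarrow> (case t1 of (X1, a1, x1, y1) \<Rightarrow> case t2 of (X2, a2, x2, y2) \<Rightarrow>
     (\<exists>\<phi>. is_iso X1 X2 \<phi> \<and> mor_eq X1 (comp a2 \<phi>) a1 \<and> mor_eq X1 (comp y2 \<phi>) y1 \<and>
          mor_eq X (comp \<phi> x1) x2))"

text \<open>Shift y X Y c c' : c' is (a result of) Shift(y : X \<hookrightarrow> Y, c).  The only freedom is the choice
  of representatives of the isomorphism classes of triples, their order in the conjunction, and the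
  choice of the pushouts.\<close>
inductive Shift :: "mor \<Rightarrow> ugraph \<Rightarrow> ugraph \<Rightarrow> cond \<Rightarrow> cond \<Rightarrow> bool" where
  Shift_true: "Shift y X Y CTrue CTrue"
| Shift_neg: "Shift y X Y c c' \<Longrightarrow> Shift y X Y (CNeg c) (CNeg c')"
| Shift_and: "Shift y X Y c1 c1' \<Longrightarrow> Shift y X Y c2 c2' \<Longrightarrow> Shift y X Y (CAnd c1 c2) (CAnd c1' c2')"
| Shift_ex: "is_graph X \<Longrightarrow> is_graph Y \<Longrightarrow> is_graph A \<Longrightarrow> M_mor X Y y \<Longrightarrow> M_mor X A a \<Longrightarrow>
    (\<forall>i<n. valid_triple X Y A a y (TX i, Ta i, Tx i, Ty i)) \<Longrightarrow>
    (\<forall>i<n. is_pushout (TX i) A Y (Ta i) (Ty i) (TP i) (Tab i) (Tyb i)) \<Longrightarrow>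
    (\<forall>i<n. Shift (Tyb i) A (TP i) cA (Tc i)) \<Longrightarrow>
    (\<forall>t. valid_triple X Y A a y t \<longrightarrow>
        (\<exists>!i. i < n \<and> triple_iso X t (TX i, Ta i, Tx i, Ty i))) \<Longrightarrow>
    Shift y X Y (CEx A a cA) (bigAnd (map (\<lambda>i. CEx (TP i) (Tab i) (Tc i)) [0..<n]))"

definition subgraph :: "ugraph \<Rightarrow> ugraph \<Rightarrow> bool" where
  "subgraph H G \<longleftrightarrow> is_graph H \<and> gE H \<subseteq> gE G \<and> gV H \<subseteq> gV G \<and> (\<forall>e\<in>gE H. gI H e = gI G e)"

definition is_disj_union :: "ugraph \<Rightarrow> ugraph \<Rightarrow> ugraph \<Rightarrow> bool" where
  "is_disj_union G G1 G2 \<longleftrightarrow> is_graph G \<and> subgraph G1 G \<and> subgraph G2 G \<and>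
     gE G1 \<inter> gE G2 = {} \<and> gV G1 \<inter> gV G2 = {} \<and>
     gE G1 \<union> gE G2 = gE G \<and> gV G1 \<union> gV G2 = gV G"

text \<open>The copairing [b1, b2] : G1 + G2 \<rightarrow> H1 + H2 (given by its action on G1 resp. G2).\<close>
definition copair :: "ugraph \<Rightarrow> mor \<Rightarrow> mor \<Rightarrow> mor" where
  "copair G1 b1 b2 = \<lparr>mE = (\<lambda>e. if e \<in> gE G1 then mE b1 e else mE b2 e),
                      mV = (\<lambda>v. if v \<in> gV G1 then mV b1 v else mV b2 v)\<rparr>"

definition del_edge :: "ugraph \<Rightarrow> nat \<Rightarrow> ugraph" where
  "del_edge G e = G\<lparr>gE := gE G - {e}\<rparr>"

end

theory Submission
  imports Defs
begin

lemma copair_M: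
  assumes X: "is_disj_union X A1 A2" and Y: "is_disj_union Y B1 B2"
    and b1: "M_mor A1 B1 \<beta>1" and b2: "M_mor A2 B2 \<beta>2"
  shows "M_mor X Y (copair A1 \<beta>1 \<beta>2)"
proof -
  let ?y = "copair A1 \<beta>1 \<beta>2"
  have gA1: "is_graph A1" and gA2: "is_graph A2" and gB1: "is_graph B1" and gB2: "is_graph B2"
    using X Y by (auto simp: is_disj_union_def subgraph_def)
  have sA1: "\<forall>e\<in>gE A1. gI A1 e = gI X e" and sA2: "\<forall>e\<in>gE A2. gI A2 e = gI X e"
    and sB1: "\<forall>e\<in>gE B1. gI B1 e = gI Y e" and sB2: "\<forall>e\<in>gE B2. gI B2 e = gI Y e"
    using X Y by (auto simp: is_disj_union_def subgraph_def)
  have dXE: "gE A1 \<inter> gE A2 = {}" "gE A1 \<union> gE A2 = gE X"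
   and dXV: "gV A1 \<inter> gV A2 = {}" "gV A1 \<union> gV A2 = gV X"
   and dYE: "gE B1 \<inter> gE B2 = {}" "gE B1 \<union> gE B2 = gE Y"
   and dYV: "gV B1 \<inter> gV B2 = {}" "gV B1 \<union> gV B2 = gV Y"
    using X Y by (auto simp: is_disj_union_def)
  have m1: "is_mor A1 B1 \<beta>1" "inj_on (mE \<beta>1) (gE A1)" "inj_on (mV \<beta>1) (gV A1)"
    and m2: "is_mor A2 B2 \<beta>2" "inj_on (mE \<beta>2) (gE A2)" "inj_on (mV \<beta>2) (gV A2)"
    using b1 b2 by (auto simp: M_mor_def)
  have i1: "\<forall>e\<in>gE A1. gI A1 e \<subseteq> gV A1" using gA1 by (auto simp: is_graph_def)
  have i2: "\<forall>e\<in>gE A2. gI A2 e \<subseteq> gV A2" using gA2 by (auto simp: is_graph_def)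
  have E1: "\<And>e. e \<in> gE A1 \<Longrightarrow> mE ?y e = mE \<beta>1 e" by (simp add: copair_def)
  have E2: "\<And>e. e \<in> gE A2 \<Longrightarrow> mE ?y e = mE \<beta>2 e" using dXE by (auto simp: copair_def)
  have V1: "\<And>w. w \<in> gV A1 \<Longrightarrow> mV ?y w = mV \<beta>1 w" by (simp add: copair_def)
  have V2: "\<And>w. w \<in> gV A2 \<Longrightarrow> mV ?y w = mV \<beta>2 w" using dXV by (auto simp: copair_def)
  have me1: "mE \<beta>1 ` gE A1 \<subseteq> gE B1" "mV \<beta>1 ` gV A1 \<subseteq> gV B1"
    and me2: "mE \<beta>2 ` gE A2 \<subseteq> gE B2" "mV \<beta>2 ` gV A2 \<subseteq> gV B2"
    using m1 m2 by (auto simp: is_mor_def)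
  have mor: "is_mor X Y ?y"
    unfolding is_mor_def
  proof (intro conjI ballI)
    show "mE ?y ` gE X \<subseteq> gE Y"
    proof
      fix g assume "g \<in> mE ?y ` gE X"
      then obtain f where f: "f \<in> gE X" and g: "g = mE ?y f" by blast
      show "g \<in> gE Y"
      proof (cases "f \<in> gE A1")
        case True thus ?thesis using g E1 me1(1) dYE(2) by blast
      next
        case False hence "f \<in> gE A2" using f dXE(2) by blast
        thus ?thesis using g E2 me2(1) dYE(2) by blast
      qed
    qed
    show "mV ?y ` gV X \<subseteq> gV Y"
    proof
      fix g assume "g \<in> mV ?y ` gV X"
      then obtain f where f: "f \<in> gV X" and g: "g = mV ?y f" by blast
      show "g \<in> gV Y"
      proof (cases "f \<in> gV A1")
        case True thus ?thesis using g V1 me1(2) dYV(2) by blast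
      next
        case False hence "f \<in> gV A2" using f dXV(2) by blast
        thus ?thesis using g V2 me2(2) dYV(2) by blast
      qed
    qed
  next
    fix f assume f: "f \<in> gE X"
    show "gI Y (mE ?y f) = mV ?y ` gI X f"
    proof (cases "f \<in> gE A1")
      case True
      have "gI Y (mE ?y f) = gI B1 (mE \<beta>1 f)" using True E1 sB1 me1 by auto
      also have "\<dots> = mV \<beta>1 ` gI A1 f" using m1 True by (auto simp: is_mor_def)
      also have "\<dots> = mV ?y ` gI A1 f" using i1 True by (intro image_cong) (auto simp: V1 subset_iff)
      finally show ?thesis using sA1 True by simp
    next
      case False
      then have T: "f \<in> gE A2" using f dXE by auto
      have "gI Y (mE ?y f) = gI B2 (mE \<beta>2 f)" using T E2 sB2 me2 by auto
      also have "\<dots> = mV \<beta>2 ` gI A2 f" using m2 T by (auto simp: is_mor_def)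
      also have "\<dots> = mV ?y ` gI A2 f" using i2 T by (intro image_cong) (auto simp: V2 subset_iff)
      finally show ?thesis using sA2 T by simp
    qed
  qed
  have injE: "inj_on (mE ?y) (gE X)"
  proof (rule inj_onI)
    fix p q assume p: "p \<in> gE X" and q: "q \<in> gE X" and eq: "mE ?y p = mE ?y q"
    show "p = q"
    proof (cases "p \<in> gE A1"; cases "q \<in> gE A1")
      assume "p \<in> gE A1" "q \<in> gE A1" thus ?thesis using eq E1 m1(2) by (metis inj_onD)
    next
      assume a: "p \<in> gE A1" "q \<notin> gE A1"
      hence "q \<in> gE A2" using q dXE by auto
      thus ?thesis using a eq E1 E2 me1 me2 dYE by (metis disjoint_iff image_subset_iff)
    next
      assume a: "p \<notin> gE A1" "q \<in> gE A1"
      hence "p \<in> gE A2" using p dXE by auto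
      thus ?thesis using a eq E1 E2 me1 me2 dYE by (metis disjoint_iff image_subset_iff)
    next
      assume a: "p \<notin> gE A1" "q \<notin> gE A1"
      hence "p \<in> gE A2" "q \<in> gE A2" using p q dXE by auto
      thus ?thesis using eq E2 m2(2) by (metis inj_onD)
    qed
  qed
  have injV: "inj_on (mV ?y) (gV X)"
  proof (rule inj_onI)
    fix p q assume p: "p \<in> gV X" and q: "q \<in> gV X" and eq: "mV ?y p = mV ?y q"
    show "p = q"
    proof (cases "p \<in> gV A1"; cases "q \<in> gV A1")
      assume "p \<in> gV A1" "q \<in> gV A1" thus ?thesis using eq V1 m1(3) by (metis inj_onD)
    next
      assume a: "p \<in> gV A1" "q \<notin> gV A1"
      hence "q \<in> gV A2" using q dXV by auto
      thus ?thesis using a eq V1 V2 me1 me2 dYV by (metis disjoint_iff image_subset_iff)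
    next
      assume a: "p \<notin> gV A1" "q \<in> gV A1"
      hence "p \<in> gV A2" using p dXV by auto
      thus ?thesis using a eq V1 V2 me1 me2 dYV by (metis disjoint_iff image_subset_iff)
    next
      assume a: "p \<notin> gV A1" "q \<notin> gV A1"
      hence "p \<in> gV A2" "q \<in> gV A2" using p q dXV by auto
      thus ?thesis using eq V2 m2(3) by (metis inj_onD)
    qed
  qed
  show ?thesis using mor injE injV by (simp add: M_mor_def)
qed


lemma no_cross:
  assumes Y: "is_disj_union Y B1 B2" and p: "p \<in> gV B1" and q: "q \<in> gV B2"
    and f: "f \<in> gE Y" and I: "gI Y f = {p, q}"
  shows False
proof -
  have gB1: "is_graph B1" and gB2: "is_graph B2"
    and sB1: "\<forall>e\<in>gE B1. gI B1 e = gI Y e" and sB2: "\<forall>e\<in>gE B2. gI B2 e = gI Y e"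
    and dE: "gE B1 \<union> gE B2 = gE Y" and dV: "gV B1 \<inter> gV B2 = {}"
    using Y by (auto simp: is_disj_union_def subgraph_def)
  show False
  proof (cases "f \<in> gE B1")
    case True
    then have "gI Y f \<subseteq> gV B1" using sB1 gB1 by (auto simp: is_graph_def)
    then show False using I q dV by auto
  next
    case False
    then have F: "f \<in> gE B2" using f dE by auto
    then have "gI Y f \<subseteq> gV B2" using sB2 gB2 by (auto simp: is_graph_def)
    then show False using I p dV by auto
  qed
qed

lemma triple_unique:
  assumes gA: "is_graph A" and eA: "e \<in> gE A" and Xd: "X = del_edge A e"
    and dX: "is_disj_union X A1 A2"
    and Ie: "gI A e = {u, v}" and u: "u \<in> gV A1" and v: "v \<in> gV A2"
    and b1: "M_mor A1 B1 \<beta>1" and b2: "M_mor A2 B2 \<beta>2"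
    and dY: "is_disj_union Y B1 B2" and yd: "y = copair A1 \<beta>1 \<beta>2"
    and vt: "valid_triple X Y A idm y (X', a', x', y')"
  shows "triple_iso X (X', a', x', y') (X, idm, idm, y)"
proof -
  have XE: "gE X = gE A - {e}" and XV: "gV X = gV A" and XI: "gI X = gI A"
    using Xd by (auto simp: del_edge_def)
  have gX': "is_graph X'" and ma: "M_mor X' A a'" and mx: "M_mor X X' x'" and my: "M_mor X' Y y'"
    and eqa: "mor_eq X (comp a' x') idm" and eqy: "mor_eq X (comp y' x') y"
    using vt by (auto simp: valid_triple_def)
  have xaE: "\<And>f. f \<in> gE X \<Longrightarrow> mE a' (mE x' f) = f"
    and xaV: "\<And>w. w \<in> gV X \<Longrightarrow> mV a' (mV x' w) = w"
    using eqa by (auto simp: mor_eq_def comp_def idm_def)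
  have yxE: "\<And>f. f \<in> gE X \<Longrightarrow> mE y' (mE x' f) = mE y f"
    and yxV: "\<And>w. w \<in> gV X \<Longrightarrow> mV y' (mV x' w) = mV y w"
    using eqy by (auto simp: mor_eq_def comp_def)
  have aE: "\<And>f. f \<in> gE X' \<Longrightarrow> mE a' f \<in> gE A"
    and aV: "\<And>w. w \<in> gV X' \<Longrightarrow> mV a' w \<in> gV A"
    and aI: "\<And>f. f \<in> gE X' \<Longrightarrow> gI A (mE a' f) = mV a' ` gI X' f"
    and ainjE: "inj_on (mE a') (gE X')" and ainjV: "inj_on (mV a') (gV X')"
    using ma by (auto simp: M_mor_def is_mor_def)
  have xE: "\<And>f. f \<in> gE X \<Longrightarrow> mE x' f \<in> gE X'"
    and xV: "\<And>w. w \<in> gV X \<Longrightarrow> mV x' w \<in> gV X'"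
    using mx by (auto simp: M_mor_def is_mor_def)
  have yE: "\<And>f. f \<in> gE X' \<Longrightarrow> mE y' f \<in> gE Y"
    and yI: "\<And>f. f \<in> gE X' \<Longrightarrow> gI Y (mE y' f) = mV y' ` gI X' f"
    using my by (auto simp: M_mor_def is_mor_def)
  have IX': "\<And>f. f \<in> gE X' \<Longrightarrow> gI X' f \<subseteq> gV X'"
    using gX' by (auto simp: is_graph_def)
  have retV: "\<And>w. w \<in> gV X' \<Longrightarrow> mV x' (mV a' w) = w"
  proof -
    fix w assume w: "w \<in> gV X'"
    have "mV a' w \<in> gV X" using aV w XV by simp
    then have "mV a' (mV x' (mV a' w)) = mV a' w" and "mV x' (mV a' w) \<in> gV X'"
      using xaV xV by auto
    then show "mV x' (mV a' w) = w" using ainjV w by (meson inj_onD)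
  qed
  have y'V: "\<And>w. w \<in> gV X' \<Longrightarrow> mV y' w = mV y (mV a' w)"
  proof -
    fix w assume w: "w \<in> gV X'"
    have "mV a' w \<in> gV X" using aV w XV by simp
    then have "mV y' (mV x' (mV a' w)) = mV y (mV a' w)" using yxV by auto
    then show "mV y' w = mV y (mV a' w)" using retV w by simp
  qed
  have dVA: "gV A1 \<inter> gV A2 = {}" using dX by (auto simp: is_disj_union_def)
  have yu: "mV y u = mV \<beta>1 u" using u yd by (simp add: copair_def)
  have yv: "mV y v = mV \<beta>2 v" using v dVA yd by (auto simp: copair_def)
  have bu: "mV \<beta>1 u \<in> gV B1" using b1 u by (auto simp: M_mor_def is_mor_def)
  have bv: "mV \<beta>2 v \<in> gV B2" using b2 v by (auto simp: M_mor_def is_mor_def)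
  have noe: "\<And>f. f \<in> gE X' \<Longrightarrow> mE a' f \<noteq> e"
  proof
    fix f assume f: "f \<in> gE X'" and ae: "mE a' f = e"
    have "gI Y (mE y' f) = mV y' ` gI X' f" using yI f by simp
    also have "\<dots> = mV y ` mV a' ` gI X' f"
      using IX'[OF f] y'V by (auto simp: image_image intro!: image_cong)
    also have "\<dots> = mV y ` {u, v}" using aI[OF f] ae Ie by simp
    also have "\<dots> = {mV \<beta>1 u, mV \<beta>2 v}" using yu yv by simp
    finally show False using no_cross[OF dY bu bv yE[OF f]] by simp
  qed
  have aEX: "\<And>f. f \<in> gE X' \<Longrightarrow> mE a' f \<in> gE X" using aE noe XE by auto
  have retE: "\<And>f. f \<in> gE X' \<Longrightarrow> mE x' (mE a' f) = f"
  proof -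
    fix f assume f: "f \<in> gE X'"
    have "mE a' f \<in> gE X" using aEX f by simp
    then have "mE a' (mE x' (mE a' f)) = mE a' f" and "mE x' (mE a' f) \<in> gE X'"
      using xaE xE by auto
    then show "mE x' (mE a' f) = f" using ainjE f by (meson inj_onD)
  qed
  have y'E: "\<And>f. f \<in> gE X' \<Longrightarrow> mE y' f = mE y (mE a' f)"
  proof -
    fix f assume f: "f \<in> gE X'"
    have "mE y' (mE x' (mE a' f)) = mE y (mE a' f)" using yxE aEX f by auto
    then show "mE y' f = mE y (mE a' f)" using retE f by simp
  qed
  have mor: "is_mor X' X a'"
    unfolding is_mor_def using aEX aV XV XI aI by auto
  have imE: "mE a' ` gE X' = gE X"
  proof
    show "mE a' ` gE X' \<subseteq> gE X" using aEX by auto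
    show "gE X \<subseteq> mE a' ` gE X'"
    proof
      fix f assume "f \<in> gE X" then show "f \<in> mE a' ` gE X'"
        using xaE xE by (metis image_eqI)
    qed
  qed
  have imV: "mV a' ` gV X' = gV X"
  proof
    show "mV a' ` gV X' \<subseteq> gV X" using aV XV by auto
    show "gV X \<subseteq> mV a' ` gV X'"
    proof
      fix f assume "f \<in> gV X" then show "f \<in> mV a' ` gV X'"
        using xaV xV by (metis image_eqI)
    qed
  qed
  have iso: "is_iso X' X a'"
    unfolding is_iso_def bij_betw_def using mor imE imV ainjE ainjV by simp
  have e1: "mor_eq X' (comp idm a') a'" by (simp add: mor_eq_def comp_def idm_def)
  have e2: "mor_eq X' (comp y a') y'" using y'E y'V by (simp add: mor_eq_def comp_def)
  have e3: "mor_eq X (comp a' x') idm" by (rule eqa)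
  show ?thesis unfolding triple_iso_def using iso e1 e2 e3 by auto
qed


theorem mainTheorem6:
  fixes A A1 A2 B1 B2 Y B :: ugraph and e u v :: nat and \<beta>1 \<beta>2 b ybar :: mor
  assumes "is_graph A"
    and "e \<in> gE A"
    and "is_disj_union (del_edge A e) A1 A2"
    and "gI A e = {u, v}" and "u \<in> gV A1" and "v \<in> gV A2"
    and "M_mor A1 B1 \<beta>1" and "M_mor A2 B2 \<beta>2"
    and "is_disj_union Y B1 B2"
    and "is_pushout (del_edge A e) A Y idm (copair A1 \<beta>1 \<beta>2) B b ybar"
  shows "Shift (copair A1 \<beta>1 \<beta>2) (del_edge A e) Y
           (CNeg (CEx A idm CTrue)) (CNeg (CEx B b CTrue))"
proof -
  define X where "X = del_edge A e"
  define y where "y = copair A1 \<beta>1 \<beta>2"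
  have gX: "is_graph X" using assms(3) by (simp add: X_def is_disj_union_def)
  have gY: "is_graph Y" using assms(9) by (simp add: is_disj_union_def)
  have My: "M_mor X Y y" unfolding y_def X_def using copair_M assms(3,7,8,9) by blast
  have MXA: "M_mor X A idm"
    using assms(1) by (auto simp: X_def M_mor_def is_mor_def idm_def del_edge_def)
  have MXX: "M_mor X X idm"
    using gX by (auto simp: M_mor_def is_mor_def idm_def is_graph_def)
  have vt0: "valid_triple X Y A idm y (X, idm, idm, y)"
    using gX MXA MXX My by (simp add: valid_triple_def mor_eq_def comp_def idm_def)
  have iso_refl: "triple_iso X (X, idm, idm, y) (X, idm, idm, y)"
    using triple_unique[OF assms(1,2) X_def _ assms(4,5,6,7,8,9) y_def vt0] assms(3) X_def
    by simp
  have uniq: "\<forall>t. valid_triple X Y A idm y t \<longrightarrow>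
        (\<exists>!i. i < (1::nat) \<and> triple_iso X t ((\<lambda>_. X) i, (\<lambda>_. idm) i, (\<lambda>_. idm) i, (\<lambda>_. y) i))"
  proof (intro allI impI)
    fix t assume vt: "valid_triple X Y A idm y t"
    obtain X' a' x' y' where t: "t = (X', a', x', y')" by (cases t) auto
    have "triple_iso X t (X, idm, idm, y)"
      using triple_unique[OF assms(1,2) X_def _ assms(4,5,6,7,8,9) y_def] vt t assms(3) X_def
      by simp
    then show "\<exists>!i. i < (1::nat) \<and> triple_iso X t ((\<lambda>_. X) i, (\<lambda>_. idm) i, (\<lambda>_. idm) i, (\<lambda>_. y) i)"
      by (intro ex1I[of _ 0]) auto
  qed
  have sh: "Shift y X Y (CEx A idm CTrue)
      (bigAnd (map (\<lambda>i. CEx ((\<lambda>_. B) i) ((\<lambda>_. b) i) ((\<lambda>_. CTrue) i)) [0..<1]))"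
    apply (rule Shift_ex[where TX="\<lambda>_. X" and Ta="\<lambda>_. idm" and Tx="\<lambda>_. idm" and Ty="\<lambda>_. y"
          and Tyb="\<lambda>_. ybar"])
    using assms(1,10) gX gY My MXA vt0 uniq Shift_true by (auto simp: X_def y_def)
  then have "Shift y X Y (CEx A idm CTrue) (CEx B b CTrue)" by simp
  then show ?thesis unfolding X_def y_def by (rule Shift_neg)
qed

end
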